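(* Let $Q,R\subseteq\mathcal{P}$, and define $\mu=TM(\xi_Q)\cdot TM(\xi_R)$ and $\nu=\gcd\!\left(\dfrac{\xi_Q}{TM(\xi_Q)},\dfrac{\xi_R}{TM(\xi_R)}\right)$. Then $\xi_{Q\cup R}=\mu\cdot\nu$.
   Context: $\mathcal{P}=\{P_1,\ldots,P_n\}$; $\varphi:2^{\mathcal{P}}\to\mathbb{F}_2^n$ sends a set to its indicator vector; for $S\subseteq\mathcal{P}$, $\xi_S(Y_1,\ldots,Y_n)=\prod_{i=1}^n(1+Y_i+\varphi(S)_i)$, i.e. $\xi_S=\prod_{i:P_i\in S}Y_i\cdot\prod_{i:P_i\notin S}(1+Y_i)$. $TM(f)$ is the smallest monomial of $f$ in the lexicographic order with $Y_n\prec\cdots\prec Y_1$. The quotient $\xi_S/TM(\xi_S)$ is the polynomial $\prod_{i:P_i\notin S}(1+Y_i)$; the gcd is taken in $\mathbb{F}_2[Y_1,\ldots,Y_n]$; products and the equality are in the Boolean polynomial ring $\mathbb{F}_2[\bar Y]/\langle Y_i^2-Y_i\rangle$. *)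

theory Defs
  imports "HOL-Library.Poly_Mapping" "HOL-Library.Z2"
begin

text \<open>Polynomials over F_2 in the variables Y_i (i :: nat), represented as finitely supported
  maps from monomials (exponent vectors) to coefficients in bit = F_2.
  The ring F_2[Y_1,...,Y_n] is the subring of polynomials whose variables lie in {1..n}.\<close>

type_synonym bpoly = "(nat \<Rightarrow>\<^sub>0 nat) \<Rightarrow>\<^sub>0 bit"

definition Yvar :: "nat \<Rightarrow> bpoly" where
  "Yvar i = Poly_Mapping.single (Poly_Mapping.single i 1) 1"

definition vars :: "bpoly \<Rightarrow> nat set" where
  "vars f = (\<Union>m\<in>Poly_Mapping.keys (f::bpoly). Poly_Mapping.keys (m :: nat \<Rightarrow>\<^sub>0 nat))"

definition poly_in :: "nat \<Rightarrow> bpoly \<Rightarrow> bool" where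
  "poly_in n f \<longleftrightarrow> vars f \<subseteq> {1..n}"

definition xi :: "nat \<Rightarrow> nat set \<Rightarrow> bpoly" where
  "xi n S = (\<Prod>i\<in>{1..n}. 1 + Yvar i + (if i \<in> S then 1 else 0))"

text \<open>Lexicographic order on monomials with Y_n < ... < Y_1.\<close>
definition lex_less :: "(nat \<Rightarrow>\<^sub>0 nat) \<Rightarrow> (nat \<Rightarrow>\<^sub>0 nat) \<Rightarrow> bool" where
  "lex_less a b \<longleftrightarrow> (\<exists>i. (\<forall>j<i. Poly_Mapping.lookup a j = Poly_Mapping.lookup b j) \<and> Poly_Mapping.lookup a i < Poly_Mapping.lookup b i)"

definition TM :: "bpoly \<Rightarrow> bpoly" where
  "TM f = Poly_Mapping.single
     (THE m. m \<in> Poly_Mapping.keys f \<and> (\<forall>m'\<in>Poly_Mapping.keys f. m' \<noteq> m \<longrightarrow> lex_less m m')) 1"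

definition pquot :: "bpoly \<Rightarrow> bpoly \<Rightarrow> bpoly" where
  "pquot f g = (THE q. f = g * q)"

text \<open>Divisibility and gcd in F_2[Y_1,...,Y_n] (units of F_2[Y] are just 1, so gcd is unique).\<close>
definition dvd_in :: "nat \<Rightarrow> bpoly \<Rightarrow> bpoly \<Rightarrow> bool" where
  "dvd_in n d a \<longleftrightarrow> (\<exists>c. poly_in n c \<and> a = d * c)"

definition is_gcd :: "nat \<Rightarrow> bpoly \<Rightarrow> bpoly \<Rightarrow> bpoly \<Rightarrow> bool" where
  "is_gcd n a b g \<longleftrightarrow> poly_in n g \<and> dvd_in n g a \<and> dvd_in n g b \<and>
     (\<forall>d. poly_in n d \<and> dvd_in n d a \<and> dvd_in n d b \<longrightarrow> dvd_in n d g)"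

text \<open>Equality in the Boolean polynomial ring F_2[Y_1..Y_n] / <Y_i^2 - Y_i>.\<close>
definition bool_eq :: "nat \<Rightarrow> bpoly \<Rightarrow> bpoly \<Rightarrow> bool" where
  "bool_eq n f g \<longleftrightarrow> (\<exists>h. (\<forall>i\<in>{1..n}. poly_in n (h i)) \<and>
     f - g = (\<Sum>i\<in>{1..n}. h i * (Yvar i ^ 2 - Yvar i)))"

end

theory Submission
  imports Defs
begin

lemma bit_add_self: "(a::bit) + a = 0"
  by (cases "a = 0") auto

lemma bp_add_self: "(x::bpoly) + x = 0"
  by (rule poly_mapping_eqI) (simp only: lookup_add bit_add_self lookup_zero)

lemma bp_minus: "(x::bpoly) - y = x + y"
proof -
  have "- y = y" using bp_add_self[of y] by (metis add_eq_0_iff)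
  thus ?thesis by (metis diff_conv_add_uminus)
qed

definition const :: "bit \<Rightarrow> bpoly" where "const a = Poly_Mapping.single 0 a"
definition mon :: "(nat \<Rightarrow> bpoly) \<Rightarrow> (nat \<Rightarrow>\<^sub>0 nat) \<Rightarrow> bpoly" where
  "mon \<sigma> m = (\<Prod>k\<in>Poly_Mapping.keys m. \<sigma> k ^ Poly_Mapping.lookup m k)"
definition ev :: "(nat \<Rightarrow> bpoly) \<Rightarrow> bpoly \<Rightarrow> bpoly" where
  "ev \<sigma> f = (\<Sum>m\<in>Poly_Mapping.keys f. const (Poly_Mapping.lookup f m) * mon \<sigma> m)"

lemma ev_superset: assumes "finite S" "Poly_Mapping.keys f \<subseteq> S"
  shows "ev \<sigma> f = (\<Sum>m\<in>S. const (Poly_Mapping.lookup f m) * mon \<sigma> m)"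
  unfolding ev_def
  by (rule sum.mono_neutral_left) (use assms in \<open>auto simp: const_def in_keys_iff\<close>)

lemma const_add: "const (a + b) = const a + const b"
  unfolding const_def by (rule single_add)
lemma const_mult: "const (a * b) = const a * const b"
  by (simp add: const_def mult_single)
lemma const_0[simp]: "const 0 = 0" by (simp add: const_def)
lemma const_1[simp]: "const 1 = 1" by (simp add: const_def)

lemma ev_add: "ev \<sigma> (f + g) = ev \<sigma> f + ev \<sigma> g"
proof -
  let ?S = "Poly_Mapping.keys f \<union> Poly_Mapping.keys g"
  have "ev \<sigma> (f + g) = (\<Sum>m\<in>?S. const (Poly_Mapping.lookup (f+g) m) * mon \<sigma> m)"
    by (rule ev_superset) (auto simp: keys_add)
  also have "\<dots> = (\<Sum>m\<in>?S. const (Poly_Mapping.lookup f m) * mon \<sigma> m) + (\<Sum>m\<in>?S. const (Poly_Mapping.lookup g m) * mon \<sigma> m)"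
    by (simp only: lookup_add const_add distrib_right sum.distrib)
  also have "\<dots> = ev \<sigma> f + ev \<sigma> g"
    by (simp add: ev_superset[symmetric])
  finally show ?thesis .
qed

lemma ev_0[simp]: "ev \<sigma> 0 = 0" by (simp add: ev_def)

lemma ev_sum: "ev \<sigma> (sum F A) = (\<Sum>a\<in>A. ev \<sigma> (F a))"
  by (induction A rule: infinite_finite_induct) (auto simp: ev_add)

lemma ev_single: "ev \<sigma> (Poly_Mapping.single m a) = const a * mon \<sigma> m"
  by (cases "a = 0") (auto simp: ev_def)

lemma mon_superset: assumes "finite S" "Poly_Mapping.keys m \<subseteq> S"
  shows "mon \<sigma> m = (\<Prod>k\<in>S. \<sigma> k ^ Poly_Mapping.lookup m k)"
  unfolding mon_def
  by (rule prod.mono_neutral_left) (use assms in \<open>auto simp: in_keys_iff\<close>)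

lemma mon_add: "mon \<sigma> (m + m') = mon \<sigma> m * mon \<sigma> m'"
proof -
  let ?S = "Poly_Mapping.keys m \<union> Poly_Mapping.keys m'"
  have "mon \<sigma> (m + m') = (\<Prod>k\<in>?S. \<sigma> k ^ Poly_Mapping.lookup (m+m') k)"
    by (rule mon_superset) (auto simp: keys_add)
  also have "\<dots> = (\<Prod>k\<in>?S. \<sigma> k ^ Poly_Mapping.lookup m k) * (\<Prod>k\<in>?S. \<sigma> k ^ Poly_Mapping.lookup m' k)"
    by (simp add: lookup_add power_add prod.distrib)
  also have "\<dots> = mon \<sigma> m * mon \<sigma> m'"
    by (simp add: mon_superset[symmetric])
  finally show ?thesis .
qed

lemma mon_0[simp]: "mon \<sigma> 0 = 1" by (simp add: mon_def)

lemma pm_sum_single: "(f :: 'a \<Rightarrow>\<^sub>0 'b::comm_monoid_add) = (\<Sum>m\<in>Poly_Mapping.keys f. Poly_Mapping.single m (Poly_Mapping.lookup f m))"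
  by (rule poly_mapping_eqI) (simp add: lookup_sum lookup_single when_def in_keys_iff)

lemma ev_mult: "ev \<sigma> (f * g) = ev \<sigma> f * ev \<sigma> g"
proof -
  let ?F = "Poly_Mapping.keys f" and ?G = "Poly_Mapping.keys g"
  let ?sf = "\<lambda>a. Poly_Mapping.single a (Poly_Mapping.lookup f a)"
  let ?sg = "\<lambda>b. Poly_Mapping.single b (Poly_Mapping.lookup g b)"
  have "f * g = (\<Sum>a\<in>?F. ?sf a) * (\<Sum>b\<in>?G. ?sg b)"
    using pm_sum_single[of f] pm_sum_single[of g] by simp
  also have "\<dots> = (\<Sum>a\<in>?F. \<Sum>b\<in>?G. ?sf a * ?sg b)" by (rule sum_product)
  finally have 1: "ev \<sigma> (f * g) = (\<Sum>a\<in>?F. \<Sum>b\<in>?G. ev \<sigma> (?sf a * ?sg b))" by (simp add: ev_sum)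
  have "ev \<sigma> f * ev \<sigma> g = (\<Sum>a\<in>?F. ev \<sigma> (?sf a)) * (\<Sum>b\<in>?G. ev \<sigma> (?sg b))"
    using pm_sum_single[of f] pm_sum_single[of g] by (metis ev_sum)
  also have "\<dots> = (\<Sum>a\<in>?F. \<Sum>b\<in>?G. ev \<sigma> (?sf a) * ev \<sigma> (?sg b))" by (rule sum_product)
  finally have 2: "ev \<sigma> f * ev \<sigma> g = \<dots>" .
  have 3: "ev \<sigma> (Poly_Mapping.single a x * Poly_Mapping.single b y) = ev \<sigma> (Poly_Mapping.single a x) * ev \<sigma> (Poly_Mapping.single b y)" for a b x y
    by (simp add: mult_single ev_single mon_add const_mult ac_simps)
  show ?thesis using 1 2 3 by simp
qed

lemma ev_1[simp]: "ev \<sigma> 1 = 1"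
  using ev_single[of \<sigma> 0 1] by simp

lemma ev_Yvar[simp]: "ev \<sigma> (Yvar i) = \<sigma> i"
  by (simp add: Yvar_def ev_single mon_def)

lemma ev_diff: "ev \<sigma> (f - g) = ev \<sigma> f - ev \<sigma> g"
  using ev_add[of \<sigma> "f - g" g] by simp

lemma ev_prod: "ev \<sigma> (prod F A) = (\<Prod>a\<in>A. ev \<sigma> (F a))"
  by (induction A rule: infinite_finite_induct) (auto simp: ev_mult)

lemma ev_power: "ev \<sigma> (f ^ k) = ev \<sigma> f ^ k"
  by (induction k) (auto simp: ev_mult)

lemma Yvar_pow: "Yvar k ^ e = Poly_Mapping.single (Poly_Mapping.single k e) 1"
proof (induction e)
  case 0 thus ?case by simp
next
  case (Suc e) thus ?case
    by (simp add: Yvar_def mult_single single_add[symmetric] add.commute)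
qed

lemma prod_single_mon: "finite K \<Longrightarrow> (\<Prod>k\<in>K. Poly_Mapping.single (g k) (1::bit)) = Poly_Mapping.single (\<Sum>k\<in>K. g k) 1"
  by (induction K rule: finite_induct) (auto simp: mult_single)

lemma mon_Yvar: "mon Yvar m = Poly_Mapping.single m 1"
proof -
  have "mon Yvar m = (\<Prod>k\<in>Poly_Mapping.keys m. Poly_Mapping.single (Poly_Mapping.single k (Poly_Mapping.lookup m k)) 1)"
    by (simp add: mon_def Yvar_pow)
  also have "\<dots> = Poly_Mapping.single (\<Sum>k\<in>Poly_Mapping.keys m. Poly_Mapping.single k (Poly_Mapping.lookup m k)) 1"
    by (simp add: prod_single_mon)
  also have "\<dots> = Poly_Mapping.single m 1" using pm_sum_single[of m] by simp
  finally show ?thesis .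
qed

lemma const_single: "const a * Poly_Mapping.single m 1 = Poly_Mapping.single m a"
  by (simp only: const_def mult_single mult.right_neutral add_0)

lemma ev_Yvar_id: "ev Yvar f = f"
proof -
  have "ev Yvar f = (\<Sum>m\<in>Poly_Mapping.keys f. Poly_Mapping.single m (Poly_Mapping.lookup f m))"
    by (simp only: ev_def mon_Yvar const_single)
  thus ?thesis using pm_sum_single[of f] by simp
qed

lemma vars_keys: "m \<in> Poly_Mapping.keys f \<Longrightarrow> Poly_Mapping.keys m \<subseteq> vars f"
  by (auto simp: vars_def)

lemma ev_fix: assumes "\<And>k. k \<in> vars f \<Longrightarrow> \<sigma> k = Yvar k" shows "ev \<sigma> f = f"
proof -
  have "ev \<sigma> f = ev Yvar f" unfolding ev_def mon_def
  proof (rule sum.cong[OF refl])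
    fix m assume "m \<in> Poly_Mapping.keys f"
    hence "\<And>k. k \<in> Poly_Mapping.keys m \<Longrightarrow> \<sigma> k = Yvar k" using assms vars_keys by blast
    thus "const (Poly_Mapping.lookup f m) * (\<Prod>k\<in>Poly_Mapping.keys m. \<sigma> k ^ Poly_Mapping.lookup m k) =
          const (Poly_Mapping.lookup f m) * (\<Prod>k\<in>Poly_Mapping.keys m. Yvar k ^ Poly_Mapping.lookup m k)"
      by simp
  qed
  thus ?thesis by (simp add: ev_Yvar_id)
qed

lemma dvd_diff_mult: assumes "p dvd a1 - b1" "p dvd a2 - b2" shows "p dvd a1 * a2 - b1 * (b2::'a::comm_ring_1)"
proof -
  have "a1 * a2 - b1 * b2 = a1 * (a2 - b2) + (a1 - b1) * b2" by (simp add: algebra_simps)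
  thus ?thesis using assms by simp
qed

lemma dvd_diff_power: assumes "p dvd a - b" shows "p dvd a ^ e - (b::'a::comm_ring_1) ^ e"
  by (induction e) (auto intro: dvd_diff_mult assms)

lemma dvd_diff_prod: assumes "\<And>k. k \<in> K \<Longrightarrow> p dvd a k - b k"
  shows "p dvd (\<Prod>k\<in>K. a k) - (\<Prod>k\<in>K. (b k::'a::comm_ring_1))"
  using assms by (induction K rule: infinite_finite_induct) (auto intro: dvd_diff_mult)

lemma ev_cong: assumes "\<And>k. p dvd \<sigma> k - \<tau> k" shows "p dvd ev \<sigma> f - ev \<tau> f"
proof -
  have "ev \<sigma> f - ev \<tau> f = (\<Sum>m\<in>Poly_Mapping.keys f. const (Poly_Mapping.lookup f m) * (mon \<sigma> m - mon \<tau> m))"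
    by (simp add: ev_def sum_subtractf right_diff_distrib)
  also have "p dvd \<dots>" unfolding mon_def
    by (intro dvd_sum dvd_mult dvd_diff_prod dvd_diff_power assms)
  finally show ?thesis .
qed

definition sb :: "nat \<Rightarrow> bpoly \<Rightarrow> bpoly" where "sb a = ev (Yvar(a := 1))"

lemma sb_kernel: assumes "sb a f = 0" shows "(1 + Yvar a) dvd f"
proof -
  have "(1 + Yvar a) dvd ev Yvar f - ev (Yvar(a := 1)) f"
  proof (rule ev_cong)
    fix k show "1 + Yvar a dvd Yvar k - (Yvar(a := 1)) k"
    proof (cases "k = a")
      case True thus ?thesis by (simp add: bp_minus add.commute)
    qed simp
  qed
  thus ?thesis using assms by (simp add: sb_def ev_Yvar_id)
qed

lemma sb_mult: "sb a (f * g) = sb a f * sb a g" by (simp add: sb_def ev_mult)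
lemma sb_p: "sb a (1 + Yvar a) = 0" by (simp add: sb_def ev_add bp_add_self)
lemma sb_q: "i \<noteq> a \<Longrightarrow> sb a (1 + Yvar i) = 1 + Yvar i" by (simp add: sb_def ev_add)

lemma p_prime: assumes "(1 + Yvar a) dvd f * g" shows "(1 + Yvar a) dvd f \<or> (1 + Yvar a) dvd g"
proof -
  from assms obtain c where "f * g = (1 + Yvar a) * c" by (auto elim: dvdE)
  hence "sb a f * sb a g = 0" by (metis sb_mult sb_p mult_zero_left)
  thus ?thesis using sb_kernel by auto
qed

lemma sing_ne0: "Poly_Mapping.single m (1::'b::zero_neq_one) \<noteq> 0"
  by (metis lookup_single_eq lookup_zero zero_neq_one)

lemma Yvar_ne0: "Yvar i \<noteq> 0" unfolding Yvar_def by (rule sing_ne0)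

lemma p_ne0: "1 + Yvar i \<noteq> 0"
proof
  assume "1 + Yvar i = 0"
  hence "Poly_Mapping.lookup (1 + Yvar i) (Poly_Mapping.single i 1) = 0" by simp
  thus False using sing_ne0[where m=i and ?'b=nat] by (simp add: lookup_add Yvar_def lookup_one when_def)
qed

definition P :: "nat set \<Rightarrow> bpoly" where "P A = (\<Prod>i\<in>A. 1 + Yvar i)"

lemma P_ne0: "finite A \<Longrightarrow> P A \<noteq> 0" by (simp add: P_def p_ne0)

lemma sb_P: "a \<notin> A \<Longrightarrow> sb a (P A) = P A"
  unfolding P_def sb_def ev_prod by (rule prod.cong[OF refl]) (metis sb_q sb_def)

lemma p_not_dvd_P: assumes "finite A" "a \<notin> A" shows "\<not> (1 + Yvar a) dvd P A"
proof
  assume "(1 + Yvar a) dvd P A"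
  then obtain c where "P A = (1 + Yvar a) * c" by (auto elim: dvdE)
  hence "sb a (P A) = 0" by (simp add: sb_mult sb_p)
  thus False using sb_P[OF assms(2)] P_ne0[OF assms(1)] by simp
qed

lemma pm_zero_least: "(0::nat \<Rightarrow>\<^sub>0 nat) \<le> m"
proof -
  have "\<not> m < 0" by transfer (simp add: less_fun_def)
  thus ?thesis by simp
qed

lemma lookup_prod_max:
  fixes f g :: bpoly
  assumes "f \<noteq> 0" "g \<noteq> 0"
  shows "Poly_Mapping.lookup (f * g) (Max (Poly_Mapping.keys f) + Max (Poly_Mapping.keys g))
       = Poly_Mapping.lookup f (Max (Poly_Mapping.keys f)) * Poly_Mapping.lookup g (Max (Poly_Mapping.keys g))"
proof -
  define F where "F = Poly_Mapping.keys f"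
  define G where "G = Poly_Mapping.keys g"
  define MF where "MF = Max F"
  define MG where "MG = Max G"
  have fin: "finite F" "finite G" by (simp_all add: F_def G_def)
  have ne: "F \<noteq> {}" "G \<noteq> {}" using assms by (simp_all add: F_def G_def)
  have mem: "MF \<in> F" "MG \<in> G" using fin ne by (simp_all add: MF_def MG_def)
  have le: "a \<le> MF" if "a \<in> F" for a using fin that by (simp add: MF_def)
  have le2: "b \<le> MG" if "b \<in> G" for b using fin that by (simp add: MG_def)
  let ?h = "\<lambda>a b. Poly_Mapping.lookup (Poly_Mapping.single (a + b) (Poly_Mapping.lookup f a * Poly_Mapping.lookup g b)) (MF + MG)"
  have "f * g = (\<Sum>a\<in>F. Poly_Mapping.single a (Poly_Mapping.lookup f a)) * (\<Sum>b\<in>G. Poly_Mapping.single b (Poly_Mapping.lookup g b))"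
    using pm_sum_single[of f] pm_sum_single[of g] by (simp add: F_def G_def)
  also have "\<dots> = (\<Sum>a\<in>F. \<Sum>b\<in>G. Poly_Mapping.single (a + b) (Poly_Mapping.lookup f a * Poly_Mapping.lookup g b))"
    by (simp add: sum_product mult_single)
  finally have "Poly_Mapping.lookup (f * g) (MF + MG) = (\<Sum>a\<in>F. \<Sum>b\<in>G. ?h a b)"
    by (simp add: lookup_sum)
  also have "\<dots> = (\<Sum>(a,b)\<in>F \<times> G. ?h a b)" by (rule sum.cartesian_product)
  also have "\<dots> = ?h MF MG + (\<Sum>(a,b)\<in>F \<times> G - {(MF,MG)}. ?h a b)"
    using mem fin by (subst sum.remove[of _ "(MF,MG)"]) auto
  also have "(\<Sum>(a,b)\<in>F \<times> G - {(MF,MG)}. ?h a b) = 0"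
  proof (rule sum.neutral, intro ballI)
    fix x assume x: "x \<in> F \<times> G - {(MF,MG)}"
    then obtain a b where xab: "x = (a,b)" by (cases x)
    with x have ab: "a \<in> F" "b \<in> G" "(a,b) \<noteq> (MF, MG)" by auto
    have "a + b < MF + MG"
    proof (cases "a = MF")
      case True
      with ab have "b < MG" using le2[of b] by auto
      thus ?thesis using True by simp
    next
      case False
      hence "a < MF" using le[of a] ab by auto
      thus ?thesis using le2[OF ab(2)] by (rule add_less_le_mono)
    qed
    thus "(case x of (a, b) \<Rightarrow> ?h a b) = 0" using xab by (auto simp: lookup_single)
  qed
  finally show ?thesis by (simp add: MF_def MG_def F_def G_def)
qed

lemma unit_eq_1: assumes "(f::bpoly) * g = 1" shows "f = 1"
proof -
  have nz: "f \<noteq> 0" "g \<noteq> 0" using assms by auto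
  define MF where "MF = Max (Poly_Mapping.keys f)"
  define MG where "MG = Max (Poly_Mapping.keys g)"
  have "MF \<in> Poly_Mapping.keys f" "MG \<in> Poly_Mapping.keys g" using nz by (simp_all add: MF_def MG_def)
  hence "Poly_Mapping.lookup f MF = 1" "Poly_Mapping.lookup g MG = 1" by (simp_all add: in_keys_iff)
  hence "Poly_Mapping.lookup (f * g) (MF + MG) = 1" using lookup_prod_max[OF nz] by (simp add: MF_def MG_def)
  hence "Poly_Mapping.lookup (1::bpoly) (MF + MG) \<noteq> 0" using assms by simp
  hence "MF + MG = 0" by (metis lookup_one when_simps(2))
  hence MF0: "MF = 0"
  proof -
    assume h: "MF + MG = 0"
    show ?thesis
    proof (rule poly_mapping_eqI)
      fix k have "Poly_Mapping.lookup (MF + MG) k = 0" using h by simp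
      thus "Poly_Mapping.lookup MF k = Poly_Mapping.lookup 0 k" by (simp add: lookup_add)
    qed
  qed
  have "a = 0" if "a \<in> Poly_Mapping.keys f" for a
  proof -
    have "a \<le> MF" using that by (simp add: MF_def)
    thus ?thesis using MF0 pm_zero_least[of a] by simp
  qed
  hence K: "Poly_Mapping.keys f = {0}" using \<open>MF \<in> _\<close> MF0 by blast
  have "f = Poly_Mapping.single 0 (Poly_Mapping.lookup f 0)" using pm_sum_single[of f] K by simp
  moreover have "Poly_Mapping.lookup f 0 = 1" using K by (metis bit_not_zero_iff in_keys_iff singletonI)
  ultimately show ?thesis by simp
qed

lemma P_empty[simp]: "P {} = 1" by (simp add: P_def)
lemma P_insert: "finite A \<Longrightarrow> a \<notin> A \<Longrightarrow> P (insert a A) = (1 + Yvar a) * P A" by (simp add: P_def)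

lemma div_P: assumes "finite A" "d dvd P A" shows "\<exists>A'\<subseteq>A. d = P A'"
  using assms
proof (induction A arbitrary: d rule: finite_induct)
  case empty
  then obtain c where "1 = d * c" by (auto elim: dvdE)
  thus ?case using unit_eq_1[of d c] by auto
next
  case (insert a A)
  let ?p = "1 + Yvar a"
  have PI: "P (insert a A) = ?p * P A" using insert by (simp add: P_insert)
  show ?case
  proof (cases "?p dvd d")
    case True
    then obtain d' where d': "d = ?p * d'" by (auto elim: dvdE)
    have "?p * d' dvd ?p * P A" using insert.prems PI d' by simp
    hence "d' dvd P A" using p_ne0 by simp
    then obtain A' where "A' \<subseteq> A" "d' = P A'" using insert.IH by blast
    moreover have "finite A'" "a \<notin> A'" using insert \<open>A' \<subseteq> A\<close> finite_subset by auto
    ultimately show ?thesis using d' by (intro exI[of _ "insert a A'"]) (auto simp: P_insert)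
  next
    case False
    obtain c where c: "?p * P A = d * c" using insert.prems PI by (auto elim: dvdE)
    hence "?p dvd d * c" by (metis dvd_triv_left)
    hence "?p dvd c" using False p_prime by blast
    then obtain c' where c': "c = ?p * c'" by (auto elim: dvdE)
    have "?p * P A = ?p * (d * c')" using c c' by (simp add: ac_simps)
    hence "P A = d * c'" using p_ne0 by simp
    hence "d dvd P A" by simp
    then obtain A' where "A' \<subseteq> A" "d = P A'" using insert.IH by blast
    thus ?thesis by blast
  qed
qed

lemma P_dvd_sub: assumes "finite A" "finite B" "P A dvd P B" shows "A \<subseteq> B"
proof
  fix a assume a: "a \<in> A"
  show "a \<in> B"
  proof (rule ccontr)
    assume "a \<notin> B"
    have "P A = (1 + Yvar a) * P (A - {a})"
      using a assms by (metis P_insert finite_Diff insert_Diff Diff_iff singletonI)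
    hence "(1 + Yvar a) dvd P B" using assms(3) by (metis dvd_mult_left)
    thus False using p_not_dvd_P[OF assms(2) \<open>a \<notin> B\<close>] by simp
  qed
qed

lemma P_split: "finite B \<Longrightarrow> A \<subseteq> B \<Longrightarrow> P B = P A * P (B - A)"
  unfolding P_def by (metis prod.subset_diff mult.commute)

lemma keys_add_nat: "Poly_Mapping.keys ((a::nat\<Rightarrow>\<^sub>0nat) + b) \<subseteq> Poly_Mapping.keys a \<union> Poly_Mapping.keys b"
  by (rule keys_add)

lemma vars_add: "vars (f + g) \<subseteq> vars f \<union> vars g"
  unfolding vars_def using keys_add[of f g] by blast

lemma vars_mult: "vars (f * g) \<subseteq> vars f \<union> vars g"
proof
  fix k assume "k \<in> vars (f * g)"
  then obtain m where m: "m \<in> Poly_Mapping.keys (f * g)" "k \<in> Poly_Mapping.keys m" by (auto simp: vars_def)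
  then obtain a b where "m = a + b" "a \<in> Poly_Mapping.keys f" "b \<in> Poly_Mapping.keys g" using keys_mult[of f g] by blast
  thus "k \<in> vars f \<union> vars g" using m(2) keys_add_nat[of a b] by (auto simp: vars_def)
qed

lemma vars_1[simp]: "vars 1 = {}" by (simp add: vars_def)
lemma vars_0[simp]: "vars 0 = {}" by (simp add: vars_def)
lemma vars_Yvar[simp]: "vars (Yvar i) = {i}" by (simp add: vars_def Yvar_def)

lemma vars_diff: "vars (f - g) \<subseteq> vars f \<union> vars g" by (simp add: bp_minus vars_add)

lemma vars_prod: "vars (prod F A) \<subseteq> (\<Union>a\<in>A. vars (F a))"
proof (induction A rule: infinite_finite_induct)
  case (insert x F) thus ?case using vars_mult by fastforce
qed auto

lemma vars_power: "vars (f ^ k) \<subseteq> vars f"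
  by (induction k) (use vars_mult in fastforce)+

lemma poly_in_mult: "poly_in n f \<Longrightarrow> poly_in n g \<Longrightarrow> poly_in n (f * g)"
  unfolding poly_in_def using vars_mult by blast
lemma poly_in_add: "poly_in n f \<Longrightarrow> poly_in n g \<Longrightarrow> poly_in n (f + g)"
  unfolding poly_in_def using vars_add by blast
lemma poly_in_diff: "poly_in n f \<Longrightarrow> poly_in n g \<Longrightarrow> poly_in n (f - g)"
  unfolding poly_in_def using vars_diff by blast
lemma poly_in_1[simp]: "poly_in n 1" by (simp add: poly_in_def)
lemma poly_in_0[simp]: "poly_in n 0" by (simp add: poly_in_def)
lemma poly_in_Yvar: "i \<in> {1..n} \<Longrightarrow> poly_in n (Yvar i)" by (simp add: poly_in_def)
lemma poly_in_prod: "(\<And>a. a \<in> A \<Longrightarrow> poly_in n (F a)) \<Longrightarrow> poly_in n (prod F A)"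
  unfolding poly_in_def using vars_prod by blast
lemma poly_in_power: "poly_in n f \<Longrightarrow> poly_in n (f ^ k)"
  unfolding poly_in_def using vars_power by blast
lemma poly_in_P: "A \<subseteq> {1..n} \<Longrightarrow> poly_in n (P A)"
  unfolding P_def by (rule poly_in_prod) (auto intro!: poly_in_add poly_in_Yvar)

definition ind :: "nat set \<Rightarrow> (nat \<Rightarrow>\<^sub>0 nat)" where "ind T = (\<Sum>i\<in>T. Poly_Mapping.single i 1)"
definition YS :: "nat set \<Rightarrow> bpoly" where "YS T = (\<Prod>i\<in>T. Yvar i)"

lemma YS_single: "finite T \<Longrightarrow> YS T = Poly_Mapping.single (ind T) 1"
  unfolding YS_def ind_def Yvar_def by (rule prod_single_mon)

lemma YS_ne0: "finite T \<Longrightarrow> YS T \<noteq> 0" by (simp add: YS_single sing_ne0)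

lemma lookup_ind: "finite T \<Longrightarrow> Poly_Mapping.lookup (ind T) i = (if i \<in> T then 1 else 0)"
  by (simp add: ind_def lookup_sum lookup_single when_def)

lemma one_x_one: "1 + x + 1 = (x::bpoly)"
proof -
  have "1 + x + 1 = x + (1 + 1)" by (simp only: ac_simps)
  thus ?thesis by (simp only: bp_add_self add_0_right)
qed

lemma xi_decomp: assumes "S \<subseteq> {1..n}" shows "xi n S = YS S * P ({1..n} - S)"
proof -
  let ?g = "\<lambda>i. 1 + Yvar i + (if i \<in> S then 1 else 0)"
  have "xi n S = prod ?g ({1..n} - S) * prod ?g S"
    unfolding xi_def using assms by (simp add: prod.subset_diff)
  also have "prod ?g S = YS S" unfolding YS_def
    by (rule prod.cong[OF refl]) (simp add: one_x_one)
  also have "prod ?g ({1..n} - S) = P ({1..n} - S)" unfolding P_def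
    by (rule prod.cong[OF refl]) simp
  finally show ?thesis by (simp add: mult.commute)
qed

lemma P_expand: "finite C \<Longrightarrow> P C = (\<Sum>T\<in>Pow C. YS T)"
proof -
  assume "finite C"
  have "P C = (\<Prod>i\<in>C. Yvar i + 1)" by (simp add: P_def add.commute)
  also have "\<dots> = (\<Sum>T\<in>Pow C. YS T * (\<Prod>i\<in>C - T. 1))"
    unfolding YS_def using \<open>finite C\<close> by (rule prod_add)
  finally show ?thesis by simp
qed

lemma keys_sum_single: "finite X \<Longrightarrow> Poly_Mapping.keys (\<Sum>x\<in>X. Poly_Mapping.single x (1::bit)) = X"
  by (auto simp: in_keys_iff lookup_sum lookup_single when_def split: if_splits)

lemma xi_keys: assumes "S \<subseteq> {1..n}"
  shows "Poly_Mapping.keys (xi n S) = (\<lambda>T. ind S + ind T) ` Pow ({1..n} - S)"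
proof -
  let ?C = "{1..n} - S"
  have finS: "finite S" using assms finite_subset by blast
  have fC: "finite ?C" by simp
  have inj: "inj_on (\<lambda>T. ind S + ind T) (Pow ?C)"
  proof
    fix T1 T2 assume T: "T1 \<in> Pow ?C" "T2 \<in> Pow ?C" "ind S + ind T1 = ind S + ind T2"
    hence e: "ind T1 = ind T2" by simp
    have f: "finite T1" "finite T2" using finite_subset[OF _ fC] T(1,2) by auto
    show "T1 = T2"
    proof (rule set_eqI)
      fix i show "i \<in> T1 \<longleftrightarrow> i \<in> T2" using arg_cong[OF e, of "\<lambda>m. Poly_Mapping.lookup m i"] f
        by (auto simp: lookup_ind split: if_splits)
    qed
  qed
  have "xi n S = YS S * (\<Sum>T\<in>Pow ?C. YS T)" using xi_decomp[OF assms] P_expand[OF fC] by simp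
  also have "\<dots> = (\<Sum>T\<in>Pow ?C. Poly_Mapping.single (ind S + ind T) 1)"
    unfolding sum_distrib_left
  proof (rule sum.cong[OF refl])
    fix T assume "T \<in> Pow ?C"
    hence "finite T" using finite_subset[OF _ fC] by auto
    thus "YS S * YS T = Poly_Mapping.single (ind S + ind T) 1" using finS by (simp add: YS_single mult_single)
  qed
  also have "\<dots> = (\<Sum>x\<in>(\<lambda>T. ind S + ind T) ` Pow ?C. Poly_Mapping.single x 1)"
    by (subst sum.reindex[OF inj]) (simp add: comp_def)
  finally show ?thesis by (simp add: keys_sum_single)
qed

lemma ind_empty[simp]: "ind {} = 0" by (simp add: ind_def)

lemma TM_xi: assumes "S \<subseteq> {1..n}" shows "TM (xi n S) = YS S"
proof -
  let ?C = "{1..n} - S"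
  let ?K = "Poly_Mapping.keys (xi n S)"
  have finS: "finite S" using assms finite_subset by blast
  have K: "?K = (\<lambda>T. ind S + ind T) ` Pow ?C" by (rule xi_keys[OF assms])
  have mem: "ind S \<in> ?K" unfolding K by (rule image_eqI[of _ _ "{}"]) auto
  have ge: "Poly_Mapping.lookup (ind S) j \<le> Poly_Mapping.lookup m j" if "m \<in> ?K" for m j
    using that unfolding K by (auto simp: lookup_add)
  have "(THE m. m \<in> ?K \<and> (\<forall>m'\<in>?K. m' \<noteq> m \<longrightarrow> lex_less m m')) = ind S"
  proof (rule the_equality)
    show "ind S \<in> ?K \<and> (\<forall>m'\<in>?K. m' \<noteq> ind S \<longrightarrow> lex_less (ind S) m')"
    proof (intro conjI ballI impI mem)
      fix m' assume m': "m' \<in> ?K" "m' \<noteq> ind S"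
      then obtain T where T: "T \<subseteq> ?C" "m' = ind S + ind T" unfolding K by auto
      have fT: "finite T" using T(1) finite_subset by blast
      have "T \<noteq> {}" using T m' by auto
      define i0 where "i0 = Min T"
      have i0: "i0 \<in> T" using fT \<open>T \<noteq> {}\<close> by (simp add: i0_def)
      have lt: "j \<notin> T" if "j < i0" for j using that fT by (metis Min_le i0_def not_le)
      show "lex_less (ind S) m'" unfolding lex_less_def
      proof (intro exI[of _ i0] conjI allI impI)
        fix j assume "j < i0" thus "Poly_Mapping.lookup (ind S) j = Poly_Mapping.lookup m' j"
          using lt[of j] fT by (simp add: T lookup_add lookup_ind)
      next
        show "Poly_Mapping.lookup (ind S) i0 < Poly_Mapping.lookup m' i0"
          using i0 T fT by (auto simp: lookup_add lookup_ind)
      qed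
    qed
  next
    fix m assume m: "m \<in> ?K \<and> (\<forall>m'\<in>?K. m' \<noteq> m \<longrightarrow> lex_less m m')"
    show "m = ind S"
    proof (rule ccontr)
      assume "m \<noteq> ind S"
      hence "lex_less m (ind S)" using m mem by auto
      then obtain i where "Poly_Mapping.lookup m i < Poly_Mapping.lookup (ind S) i" by (auto simp: lex_less_def)
      thus False using ge[of m i] m by simp
    qed
  qed
  thus ?thesis by (simp add: TM_def YS_single finS)
qed

lemma pquot_xi: assumes "S \<subseteq> {1..n}" shows "pquot (xi n S) (TM (xi n S)) = P ({1..n} - S)"
proof -
  have finS: "finite S" using assms finite_subset by blast
  show ?thesis unfolding pquot_def TM_xi[OF assms]
  proof (rule the_equality)
    show "xi n S = YS S * P ({1..n} - S)" by (rule xi_decomp[OF assms])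
  next
    fix q assume "xi n S = YS S * q"
    hence "YS S * q = YS S * P ({1..n} - S)" using xi_decomp[OF assms] by metis
    thus "q = P ({1..n} - S)" using YS_ne0[OF finS] by (metis mult_left_cancel)
  qed
qed

definition inJ :: "nat \<Rightarrow> bpoly \<Rightarrow> bool" where
  "inJ n f \<longleftrightarrow> (\<exists>h. (\<forall>i\<in>{1..n}. poly_in n (h i)) \<and> f = (\<Sum>i\<in>{1..n}. h i * (Yvar i ^ 2 - Yvar i)))"

lemma inJ_add: assumes "inJ n f" "inJ n g" shows "inJ n (f + g)"
proof -
  obtain h1 where h1: "\<forall>i\<in>{1..n}. poly_in n (h1 i)" "f = (\<Sum>i\<in>{1..n}. h1 i * (Yvar i ^ 2 - Yvar i))"
    using assms(1) by (auto simp: inJ_def)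
  obtain h2 where h2: "\<forall>i\<in>{1..n}. poly_in n (h2 i)" "g = (\<Sum>i\<in>{1..n}. h2 i * (Yvar i ^ 2 - Yvar i))"
    using assms(2) by (auto simp: inJ_def)
  show ?thesis unfolding inJ_def
    by (rule exI[of _ "\<lambda>i. h1 i + h2 i"]) (use h1 h2 in \<open>auto intro: poly_in_add simp: sum.distrib distrib_right\<close>)
qed

lemma inJ_mult: assumes "poly_in n c" "inJ n f" shows "inJ n (c * f)"
proof -
  obtain h1 where h1: "\<forall>i\<in>{1..n}. poly_in n (h1 i)" "f = (\<Sum>i\<in>{1..n}. h1 i * (Yvar i ^ 2 - Yvar i))"
    using assms(2) by (auto simp: inJ_def)
  show ?thesis unfolding inJ_def
    by (rule exI[of _ "\<lambda>i. c * h1 i"]) (use h1 assms(1) in \<open>auto intro: poly_in_mult simp: sum_distrib_left mult.assoc\<close>)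
qed

lemma inJ_gen: assumes "i \<in> {1..n}" shows "inJ n (Yvar i ^ 2 - Yvar i)"
proof -
  have "(\<Sum>j\<in>{1..n}. (if j = i then 1 else 0) * (Yvar j ^ 2 - Yvar j)) = (\<Sum>j\<in>{1..n}. if j = i then Yvar j ^ 2 - Yvar j else 0)"
    by (rule sum.cong) auto
  also have "\<dots> = Yvar i ^ 2 - Yvar i" using assms by (simp add: sum.delta')
  finally show ?thesis unfolding inJ_def
    by (intro exI[of _ "\<lambda>j. if j = i then 1 else 0"]) auto
qed

lemma YS_insert: "finite I \<Longrightarrow> a \<notin> I \<Longrightarrow> YS (insert a I) = Yvar a * YS I" by (simp add: YS_def)

lemma poly_in_YS: "I \<subseteq> {1..n} \<Longrightarrow> poly_in n (YS I)"
  unfolding YS_def by (rule poly_in_prod) (meson poly_in_Yvar subsetD)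

lemma inJ_YS: assumes "finite I" shows "I \<subseteq> {1..n} \<Longrightarrow> inJ n (YS I ^ 2 - YS I)"
  using assms
proof (induction I rule: finite_induct)
  case empty
  have "inJ n 0" unfolding inJ_def by (rule exI[of _ "\<lambda>_. 0"]) simp
  thus ?case by (simp add: YS_def)
next
  case (insert a I)
  have ring: "(x * y) ^ 2 - x * y = x ^ 2 * (y ^ 2 - y) + y * (x ^ 2 - x)" for x y :: bpoly
    by (simp add: algebra_simps power2_eq_square)
  have "inJ n ((Yvar a) ^ 2 * (YS I ^ 2 - YS I) + YS I * (Yvar a ^ 2 - Yvar a))"
    using insert by (intro inJ_add inJ_mult poly_in_power poly_in_Yvar poly_in_YS inJ_gen) auto
  thus ?case using insert by (simp add: YS_insert ring)
qed

lemma dvd_in_dvd: "dvd_in n d a \<Longrightarrow> d dvd a" by (auto simp: dvd_in_def)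

theorem mainTheorem16:
  fixes n :: nat and Q R :: "nat set"
  assumes "Q \<subseteq> {1..n}" and "R \<subseteq> {1..n}"
  shows "(\<exists>\<nu>. is_gcd n (pquot (xi n Q) (TM (xi n Q))) (pquot (xi n R) (TM (xi n R))) \<nu>) \<and>
    (\<forall>\<nu>. is_gcd n (pquot (xi n Q) (TM (xi n Q))) (pquot (xi n R) (TM (xi n R))) \<nu> \<longrightarrow>
       bool_eq n (xi n (Q \<union> R)) ((TM (xi n Q) * TM (xi n R)) * \<nu>))"
proof -
  define CQ where "CQ = {1..n} - Q"
  define CR where "CR = {1..n} - R"
  define C0 where "C0 = {1..n} - (Q \<union> R)"
  have C0I: "C0 = CQ \<inter> CR" by (auto simp: C0_def CQ_def CR_def)
  have fin: "finite CQ" "finite CR" "finite C0" by (simp_all add: CQ_def CR_def C0_def)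
  have sub: "CQ \<subseteq> {1..n}" "CR \<subseteq> {1..n}" "C0 \<subseteq> {1..n}" by (auto simp: CQ_def CR_def C0_def)
  have pq: "pquot (xi n Q) (TM (xi n Q)) = P CQ" unfolding CQ_def by (rule pquot_xi[OF assms(1)])
  have pr: "pquot (xi n R) (TM (xi n R)) = P CR" unfolding CR_def by (rule pquot_xi[OF assms(2)])
  have divs: "dvd_in n (P A) (P B)" if "A \<subseteq> B" "B \<subseteq> {1..n}" for A B
  proof -
    have "finite B" using that finite_subset by blast
    hence "P B = P A * P (B - A)" using that by (simp add: P_split)
    moreover have "poly_in n (P (B - A))" using that by (intro poly_in_P) auto
    ultimately show ?thesis unfolding dvd_in_def by blast
  qed
  have cls: "\<exists>A'\<subseteq>C0. d = P A'" if h1: "dvd_in n d (P CQ)" and h2: "dvd_in n d (P CR)" for d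
  proof -
    obtain A' where A': "A' \<subseteq> CQ" "d = P A'" using div_P[OF fin(1) dvd_in_dvd[OF h1]] by blast
    have "finite A'" using A' fin finite_subset by blast
    hence "A' \<subseteq> CR" using P_dvd_sub[of A' CR] dvd_in_dvd[OF h2] A' fin by simp
    thus ?thesis using A' C0I by blast
  qed
  have gcd0: "is_gcd n (P CQ) (P CR) (P C0)"
    unfolding is_gcd_def
  proof (intro conjI allI impI)
    show "poly_in n (P C0)" using sub by (simp add: poly_in_P)
    show "dvd_in n (P C0) (P CQ)" using C0I sub by (intro divs) auto
    show "dvd_in n (P C0) (P CR)" using C0I sub by (intro divs) auto
  next
    fix d assume "poly_in n d \<and> dvd_in n d (P CQ) \<and> dvd_in n d (P CR)"
    then obtain A' where "A' \<subseteq> C0" "d = P A'" using cls by blast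
    thus "dvd_in n d (P C0)" using sub by (simp add: divs)
  qed
  have uniq: "\<nu> = P C0" if hg: "is_gcd n (P CQ) (P CR) \<nu>" for \<nu>
  proof -
    obtain A' where A': "A' \<subseteq> C0" "\<nu> = P A'" using hg cls unfolding is_gcd_def by blast
    have "finite A'" using A' fin finite_subset by blast
    have "dvd_in n (P C0) \<nu>" using hg gcd0 unfolding is_gcd_def by blast
    hence "C0 \<subseteq> A'" using P_dvd_sub[of C0 A'] dvd_in_dvd A' fin \<open>finite A'\<close> by simp
    thus ?thesis using A' by auto
  qed
  have beq: "bool_eq n (xi n (Q \<union> R)) ((TM (xi n Q) * TM (xi n R)) * P C0)"
  proof -
    define I where "I = Q \<inter> R"
    define D where "D = (Q \<union> R) - I"
    have QR: "Q \<union> R \<subseteq> {1..n}" using assms by auto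
    have fQR: "finite (Q \<union> R)" using QR finite_subset by blast
    have fQ: "finite Q" "finite R" using fQR by auto
    have I_sub: "I \<subseteq> Q \<union> R" by (auto simp: I_def)
    have fI: "finite I" using I_sub fQR finite_subset by blast
    have a1: "xi n (Q \<union> R) = YS (Q \<union> R) * P C0" unfolding C0_def by (rule xi_decomp[OF QR])
    have a2: "TM (xi n Q) * TM (xi n R) = YS (Q \<union> R) * YS I"
      unfolding TM_xi[OF assms(1)] TM_xi[OF assms(2)] YS_def I_def
      using fQ by (simp add: prod.union_inter)
    have a3: "YS (Q \<union> R) = YS D * YS I"
      unfolding YS_def D_def using fQR I_sub by (simp add: prod.subset_diff)
    have "xi n (Q \<union> R) - (TM (xi n Q) * TM (xi n R)) * P C0 = (YS D * P C0) * (YS I - YS I ^ 2)"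
      unfolding a1 a2 a3 by (simp only: power2_eq_square right_diff_distrib mult_ac)
    also have "YS I - YS I ^ 2 = YS I ^ 2 - YS I" by (simp add: bp_minus add.commute)
    finally have e: "xi n (Q \<union> R) - (TM (xi n Q) * TM (xi n R)) * P C0 = (YS D * P C0) * (YS I ^ 2 - YS I)" .
    have "D \<subseteq> {1..n}" "I \<subseteq> {1..n}" using QR I_sub by (auto simp: D_def)
    hence "inJ n ((YS D * P C0) * (YS I ^ 2 - YS I))"
      using sub fI by (intro inJ_mult poly_in_mult poly_in_YS poly_in_P inJ_YS) auto
    then obtain h where h: "\<forall>i\<in>{1..n}. poly_in n (h i)"
      "(YS D * P C0) * (YS I ^ 2 - YS I) = (\<Sum>i\<in>{1..n}. h i * (Yvar i ^ 2 - Yvar i))"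
      unfolding inJ_def by blast
    show ?thesis unfolding bool_eq_def by (rule exI[of _ h]) (use h e in simp)
  qed
  show ?thesis unfolding pq pr
  proof (intro conjI exI[of _ "P C0"] allI impI gcd0)
    fix \<nu> assume "is_gcd n (P CQ) (P CR) \<nu>"
    hence "\<nu> = P C0" by (rule uniq)
    thus "bool_eq n (xi n (Q \<union> R)) ((TM (xi n Q) * TM (xi n R)) * \<nu>)" using beq by simp
  qed
qed

end
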